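(* Let $\alpha\in(1,2)$, $\sigma:\mathbb{R}\to(0,\infty)$ continuous, and let $Y$ be the time-changed symmetric $\alpha$-stable process described in the context. If $$\delta_+:=\sup_{x>0}x^{\alpha-1}\int_x^\infty\sigma(z)^{-\alpha}dz<\infty,$$ then for every $x>0$, $$\mathrm{II}^+(\varphi)(x)\le\frac{4}{\Gamma(\alpha/2)^2(\alpha-1)}\delta_+,$$ where $\varphi(x)=x^{(\alpha-1)/2}$.
   Context: $X$ is the symmetric $\alpha$-stable process on $\mathbb{R}$ (generator $-(-\Delta)^{\alpha/2}$), and $Y_t=X_{\zeta_t}$ with $\zeta_t=\inf\{s>0:\int_0^s\sigma(X_u)^{-\alpha}du>t\}$. For a positive function $f$ on $(0,\infty)$ define $$\mathrm{II}^+(f)(x)=\frac{1}{\Gamma(\alpha/2)^2f(x)}\int_0^xz^{\alpha-2}\left(\int_z^\infty f(y)\sigma(y)^{-\alpha}dy\right)dz,\quad x>0$$ (an upper bound for $U^{(0,\infty)}f(x)/f(x)$, where $U^{(0,\infty)}f(x)=\mathbb{E}_x\int_0^{\tau_{(0,\infty)}}f(Y_t)dt$ and $\tau_{(0,\infty)}$ is the exit time of $Y$ from $(0,\infty)$). *)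

theory Defs
  imports "HOL-Analysis.Analysis"
begin

text \<open>II^+(f)(x), as an extended nonnegative real (all integrands are nonnegative).\<close>
definition II_plus :: "real \<Rightarrow> (real \<Rightarrow> real) \<Rightarrow> (real \<Rightarrow> real) \<Rightarrow> real \<Rightarrow> ennreal" where
  "II_plus \<alpha> \<sigma> f x =
     (\<integral>\<^sup>+ z\<in>{0<..<x}. ennreal (z powr (\<alpha> - 2)) *
        (\<integral>\<^sup>+ y\<in>{z<..}. ennreal (f y * \<sigma> y powr (-\<alpha>)) \<partial>lborel) \<partial>lborel)
     / ennreal (Gamma (\<alpha> / 2) ^ 2 * f x)"

definition delta_plus :: "real \<Rightarrow> (real \<Rightarrow> real) \<Rightarrow> ennreal" where
  "delta_plus \<alpha> \<sigma> = (SUP x\<in>{0<..}. ennreal (x powr (\<alpha> - 1)) *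
        (\<integral>\<^sup>+ z\<in>{x<..}. ennreal (\<sigma> z powr (-\<alpha>)) \<partial>lborel))"

end

theory Submission
  imports Defs
begin

lemma stepA:
  fixes \<alpha> :: real and \<sigma> :: "real \<Rightarrow> real" and t :: real
  assumes "t > 0"
  shows "(\<integral>\<^sup>+ y\<in>{t<..}. ennreal (\<sigma> y powr (-\<alpha>)) \<partial>lborel) \<le> delta_plus \<alpha> \<sigma> * ennreal (t powr (1 - \<alpha>))"
proof -
  let ?S = "(\<integral>\<^sup>+ y\<in>{t<..}. ennreal (\<sigma> y powr (-\<alpha>)) \<partial>lborel)"
  have "ennreal (t powr (\<alpha> - 1)) * ?S \<le> delta_plus \<alpha> \<sigma>"
    unfolding delta_plus_def using assms by (intro SUP_upper) auto
  hence "ennreal (t powr (\<alpha> - 1)) * ?S * ennreal (t powr (1 - \<alpha>)) \<le> delta_plus \<alpha> \<sigma> * ennreal (t powr (1 - \<alpha>))"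
    by (rule mult_right_mono) simp
  moreover have "ennreal (t powr (\<alpha> - 1)) * ?S * ennreal (t powr (1 - \<alpha>)) = ?S"
  proof -
    have "ennreal (t powr (\<alpha> - 1)) * ennreal (t powr (1 - \<alpha>)) = ennreal (t powr (\<alpha> - 1) * t powr (1 - \<alpha>))"
      by (simp add: ennreal_mult)
    also have "\<dots> = 1" using assms by (simp add: powr_add[symmetric])
    finally have e1: "ennreal (t powr (\<alpha> - 1)) * ennreal (t powr (1 - \<alpha>)) = 1" .
    have "ennreal (t powr (\<alpha> - 1)) * ?S * ennreal (t powr (1 - \<alpha>)) = ?S * (ennreal (t powr (\<alpha> - 1)) * ennreal (t powr (1 - \<alpha>)))" by (simp only: mult_ac)
    then show ?thesis using e1 by simp
  qed
  ultimately show ?thesis by simp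
qed

lemma hm_test:
  fixes g :: "real \<Rightarrow> real" and z \<beta> :: real
  assumes [measurable]: "g \<in> borel_measurable borel"
  defines "h \<equiv> \<lambda>t y. ennreal (g y) * (ennreal (\<beta> * t powr (\<beta> - 1)) * indicator {z..} t * indicator {t..} y)"
  shows "case_prod h \<in> borel_measurable (lborel \<Otimes>\<^sub>M lborel)"
proof -
  have e: "case_prod h = (\<lambda>p. ennreal (g (snd p)) * (ennreal (\<beta> * fst p powr (\<beta> - 1)) * indicator {z..} (fst p) * indicator {p. fst p \<le> snd p} p))"
    by (auto simp: h_def fun_eq_iff split: split_indicator)
  show ?thesis unfolding e by measurable
qed

lemma meas_g:
  assumes "continuous_on UNIV \<sigma>" "\<And>y. \<sigma> y > (0::real)"
  shows "(\<lambda>y. \<sigma> y powr (-\<alpha>)) \<in> borel_measurable borel"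
proof (rule borel_measurable_continuous_onI)
  show "continuous_on UNIV (\<lambda>y. \<sigma> y powr (-\<alpha>))"
  proof (rule continuous_on_powr)
    show "continuous_on UNIV \<sigma>" by (rule assms(1))
    show "continuous_on UNIV (\<lambda>y. - \<alpha>)" by (rule continuous_on_const)
    show "\<forall>y\<in>UNIV. \<sigma> y \<noteq> 0" using assms(2) by (metis less_irrefl)
  qed
qed

lemma ftc_pow:
  fixes \<beta> z y :: real
  assumes "0 < z" "z \<le> y" "\<beta> > 0"
  shows "ennreal (y powr \<beta>) = ennreal (z powr \<beta>) + (\<integral>\<^sup>+ t. ennreal (\<beta> * t powr (\<beta> - 1)) * indicator {z..y} t \<partial>lborel)"
proof -
  have "(\<integral>\<^sup>+ t. ennreal (\<beta> * t powr (\<beta> - 1)) * indicator {z..y} t \<partial>lborel) = ennreal (y powr \<beta> - z powr \<beta>)"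
  proof (rule nn_integral_FTC_Icc)
    show "(\<lambda>t. \<beta> * t powr (\<beta> - 1)) \<in> borel_measurable borel" by measurable
    fix t assume "t \<in> {z..y}"
    hence "t > 0" using assms by auto
    show "((\<lambda>t. t powr \<beta>) has_real_derivative \<beta> * t powr (\<beta> - 1)) (at t)"
      using \<open>t > 0\<close> by (auto intro!: derivative_eq_intros)
    show "0 \<le> \<beta> * t powr (\<beta> - 1)" using assms by simp
  qed (use assms in auto)
  moreover have "z powr \<beta> \<le> y powr \<beta>" using assms by (simp add: powr_mono2)
  ultimately show ?thesis by (simp add: ennreal_plus[symmetric])
qed

lemma ftc_tail:
  fixes \<beta> z :: real
  assumes "0 < z" "\<beta> > 0"
  shows "(\<integral>\<^sup>+ t. ennreal (\<beta> * t powr (- \<beta> - 1)) * indicator {z..} t \<partial>lborel) = ennreal (z powr (- \<beta>))"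
proof -
  have "(\<integral>\<^sup>+ t. ennreal (\<beta> * t powr (- \<beta> - 1)) * indicator {z..} t \<partial>lborel) = ennreal (0 - (- (z powr (- \<beta>))))"
  proof (rule nn_integral_FTC_atLeast)
    show "(\<lambda>t. \<beta> * t powr (- \<beta> - 1)) \<in> borel_measurable borel" by measurable
    fix t assume "z \<le> t"
    hence "t > 0" using assms by auto
    show "((\<lambda>t. - (t powr (- \<beta>))) has_real_derivative \<beta> * t powr (- \<beta> - 1)) (at t)"
      using \<open>t > 0\<close> by (auto intro!: derivative_eq_intros simp: algebra_simps)
    show "0 \<le> \<beta> * t powr (- \<beta> - 1)" using assms by simp
  next
    have "((\<lambda>t::real. t powr (- \<beta>)) \<longlongrightarrow> 0) at_top"
      using assms by (intro tendsto_neg_powr filterlim_ident) auto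
    then show "((\<lambda>t::real. - (t powr (- \<beta>))) \<longlongrightarrow> 0) at_top"
      using tendsto_minus by fastforce
  qed
  then show ?thesis by simp
qed

lemma stepB:
  fixes \<alpha> :: real and \<sigma> :: "real \<Rightarrow> real" and z :: real
  assumes a1: "1 < \<alpha>" and sc: "continuous_on UNIV \<sigma>" and sp: "\<And>y. \<sigma> y > 0" and z: "z > 0"
  shows "(\<integral>\<^sup>+ y\<in>{z<..}. ennreal (y powr ((\<alpha> - 1) / 2) * \<sigma> y powr (-\<alpha>)) \<partial>lborel)
           \<le> 2 * delta_plus \<alpha> \<sigma> * ennreal (z powr (- ((\<alpha> - 1) / 2)))"
proof -
  define \<beta> where "\<beta> = (\<alpha> - 1) / 2"
  define g where "g y = \<sigma> y powr (-\<alpha>)" for y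
  define D where "D = delta_plus \<alpha> \<sigma>"
  have bpos: "\<beta> > 0" using a1 by (simp add: \<beta>_def)
  have gm[measurable]: "g \<in> borel_measurable borel" unfolding g_def by (rule meas_g[OF sc sp])
  have gnn: "g y \<ge> 0" for y by (simp add: g_def)
  define h where "h t y = ennreal (g y) * (ennreal (\<beta> * t powr (\<beta> - 1)) * indicator {z..} t * indicator {t..} y)" for t y
  have hm: "case_prod h \<in> borel_measurable (lborel \<Otimes>\<^sub>M lborel)"
    unfolding h_def by (rule hm_test[OF gm, unfolded atomize_eq]) 
  have A: "(\<integral>\<^sup>+ y. ennreal (g y) * indicator {t..} y \<partial>lborel) \<le> D * ennreal (t powr (1 - \<alpha>))" if "t > 0" for t
  proof -
    have "(\<integral>\<^sup>+ y. ennreal (g y) * indicator {t..} y \<partial>lborel) = (\<integral>\<^sup>+ y\<in>{t<..}. ennreal (g y) \<partial>lborel)"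
      by (rule nn_integral_cong_AE) (use AE_lborel_singleton[of t] in \<open>auto split: split_indicator\<close>)
    also have "\<dots> \<le> D * ennreal (t powr (1 - \<alpha>))" unfolding g_def D_def by (rule stepA[OF that])
    finally show ?thesis .
  qed
  have pt: "ennreal (y powr \<beta> * g y) * indicator {z<..} y
      \<le> ennreal (z powr \<beta>) * (ennreal (g y) * indicator {z<..} y) + (\<integral>\<^sup>+ t. h t y \<partial>lborel)" for y
  proof (cases "z < y")
    case True
    have "(\<integral>\<^sup>+ t. h t y \<partial>lborel) = (\<integral>\<^sup>+ t. ennreal (g y) * (ennreal (\<beta> * t powr (\<beta> - 1)) * indicator {z..y} t) \<partial>lborel)"
      unfolding h_def by (intro nn_integral_cong) (auto split: split_indicator)
    also have "\<dots> = ennreal (g y) * (\<integral>\<^sup>+ t. ennreal (\<beta> * t powr (\<beta> - 1)) * indicator {z..y} t \<partial>lborel)"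
      by (rule nn_integral_cmult) measurable
    finally have eq: "(\<integral>\<^sup>+ t. h t y \<partial>lborel) = \<dots>" .
    have "ennreal (y powr \<beta> * g y) = ennreal (g y) * ennreal (y powr \<beta>)"
      using ennreal_mult''[OF gnn, of "y powr \<beta>" y] by (simp add: mult.commute)
    also have "\<dots> = ennreal (g y) * (ennreal (z powr \<beta>) + (\<integral>\<^sup>+ t. ennreal (\<beta> * t powr (\<beta> - 1)) * indicator {z..y} t \<partial>lborel))"
      using ftc_pow[OF z _ bpos, of y] True by simp
    also have "\<dots> = ennreal (z powr \<beta>) * ennreal (g y) + ennreal (g y) * (\<integral>\<^sup>+ t. ennreal (\<beta> * t powr (\<beta> - 1)) * indicator {z..y} t \<partial>lborel)"
      by (simp only: distrib_left mult.commute)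
    finally show ?thesis using True eq by simp
  qed auto
  have "(\<integral>\<^sup>+ y\<in>{z<..}. ennreal (y powr ((\<alpha> - 1) / 2) * \<sigma> y powr (-\<alpha>)) \<partial>lborel)
      = (\<integral>\<^sup>+ y. ennreal (y powr \<beta> * g y) * indicator {z<..} y \<partial>lborel)"
    by (simp add: \<beta>_def g_def)
  also have "\<dots> \<le> (\<integral>\<^sup>+ y. ennreal (z powr \<beta>) * (ennreal (g y) * indicator {z<..} y) + (\<integral>\<^sup>+ t. h t y \<partial>lborel) \<partial>lborel)"
    by (rule nn_integral_mono) (rule pt)
  also have "\<dots> = ennreal (z powr \<beta>) * (\<integral>\<^sup>+ y. ennreal (g y) * indicator {z<..} y \<partial>lborel)
       + (\<integral>\<^sup>+ y. (\<integral>\<^sup>+ t. h t y \<partial>lborel) \<partial>lborel)"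
    using hm by (subst nn_integral_add) (auto intro!: nn_integral_cmult)
  also have "(\<integral>\<^sup>+ y. (\<integral>\<^sup>+ t. h t y \<partial>lborel) \<partial>lborel) = (\<integral>\<^sup>+ t. (\<integral>\<^sup>+ y. h t y \<partial>lborel) \<partial>lborel)"
    by (rule lborel_pair.Fubini'[OF hm])
  also have "\<dots> \<le> (\<integral>\<^sup>+ t. D * (ennreal (\<beta> * t powr (- \<beta> - 1)) * indicator {z..} t) \<partial>lborel)"
  proof (rule nn_integral_mono)
    fix t
    show "(\<integral>\<^sup>+ y. h t y \<partial>lborel) \<le> D * (ennreal (\<beta> * t powr (- \<beta> - 1)) * indicator {z..} t)"
    proof (cases "z \<le> t")
      case True
      then have tp: "t > 0" using z by simp
      have "(\<integral>\<^sup>+ y. h t y \<partial>lborel) = (\<integral>\<^sup>+ y. ennreal (\<beta> * t powr (\<beta> - 1)) * (ennreal (g y) * indicator {t..} y) \<partial>lborel)"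
        unfolding h_def using True by (intro nn_integral_cong) (simp only: mult_ac indicator_simps atLeast_iff mult_1 if_True)
      also have "\<dots> = ennreal (\<beta> * t powr (\<beta> - 1)) * (\<integral>\<^sup>+ y. ennreal (g y) * indicator {t..} y \<partial>lborel)"
        by (rule nn_integral_cmult) measurable
      also have "\<dots> \<le> ennreal (\<beta> * t powr (\<beta> - 1)) * (D * ennreal (t powr (1 - \<alpha>)))"
        by (intro mult_left_mono A tp) simp
      also have "\<dots> = D * ennreal (\<beta> * t powr (\<beta> - 1) * t powr (1 - \<alpha>))"
        using bpos tp by (simp add: ennreal_mult'' mult_ac)
      also have "\<beta> * t powr (\<beta> - 1) * t powr (1 - \<alpha>) = \<beta> * t powr (- \<beta> - 1)"
        using tp by (simp add: mult.assoc powr_add[symmetric] \<beta>_def field_simps)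
      finally show ?thesis using True by simp
    qed (simp add: h_def)
  qed
  also have "\<dots> = D * ennreal (z powr (- \<beta>))"
    by (subst nn_integral_cmult) (auto simp: ftc_tail[OF z bpos])
  finally have main: "(\<integral>\<^sup>+ y\<in>{z<..}. ennreal (y powr ((\<alpha> - 1) / 2) * \<sigma> y powr (-\<alpha>)) \<partial>lborel)
     \<le> ennreal (z powr \<beta>) * (\<integral>\<^sup>+ y. ennreal (g y) * indicator {z<..} y \<partial>lborel) + D * ennreal (z powr (- \<beta>))"
    by (simp add: add_mono)
  have "(\<integral>\<^sup>+ y. ennreal (g y) * indicator {z<..} y \<partial>lborel) \<le> D * ennreal (z powr (1 - \<alpha>))"
    using stepA[OF z, of \<sigma> \<alpha>] by (simp add: g_def D_def)
  hence "ennreal (z powr \<beta>) * (\<integral>\<^sup>+ y. ennreal (g y) * indicator {z<..} y \<partial>lborel)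
     \<le> ennreal (z powr \<beta>) * (D * ennreal (z powr (1 - \<alpha>)))"
    by (rule mult_left_mono) simp
  also have "ennreal (z powr \<beta>) * (D * ennreal (z powr (1 - \<alpha>))) = D * ennreal (z powr \<beta> * z powr (1 - \<alpha>))"
    by (simp add: ennreal_mult mult_ac)
  also have "z powr \<beta> * z powr (1 - \<alpha>) = z powr (- \<beta>)"
  proof -
    have "\<beta> + (1 - \<alpha>) = - \<beta>" by (simp add: \<beta>_def field_simps)
    then show ?thesis by (simp only: powr_add[symmetric])
  qed
  finally have "(\<integral>\<^sup>+ y\<in>{z<..}. ennreal (y powr ((\<alpha> - 1) / 2) * \<sigma> y powr (-\<alpha>)) \<partial>lborel)
     \<le> D * ennreal (z powr (- \<beta>)) + D * ennreal (z powr (- \<beta>))"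
    using main by (meson add_right_mono order_trans)
  also have "\<dots> = 2 * D * ennreal (z powr (- \<beta>))"
    by (simp add: mult_2 distrib_right)
  finally show ?thesis by (simp add: D_def \<beta>_def)
qed


theorem lemma3p4:
  fixes \<alpha> :: real and \<sigma> :: "real \<Rightarrow> real" and x :: real
  assumes "1 < \<alpha>" "\<alpha> < 2"
    and "continuous_on UNIV \<sigma>" "\<And>y. \<sigma> y > 0"
    and "delta_plus \<alpha> \<sigma> < \<infinity>"
    and "x > 0"
  shows "II_plus \<alpha> \<sigma> (\<lambda>y. y powr ((\<alpha> - 1) / 2)) x
           \<le> ennreal (4 / (Gamma (\<alpha> / 2) ^ 2 * (\<alpha> - 1))) * delta_plus \<alpha> \<sigma>"
proof -
  define \<beta> where "\<beta> = (\<alpha> - 1) / 2"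
  define D where "D = delta_plus \<alpha> \<sigma>"
  have bpos: "\<beta> > 0" using assms(1) by (simp add: \<beta>_def)
  have Gpos: "Gamma (\<alpha> / 2) > 0" using assms(1) by (intro Gamma_real_pos) simp
  have xb: "x powr \<beta> > 0" using assms(6) by simp
  define N where "N = (\<integral>\<^sup>+ z\<in>{0<..<x}. ennreal (z powr (\<alpha> - 2)) *
        (\<integral>\<^sup>+ y\<in>{z<..}. ennreal (y powr ((\<alpha> - 1) / 2) * \<sigma> y powr (-\<alpha>)) \<partial>lborel) \<partial>lborel)"
  have II: "II_plus \<alpha> \<sigma> (\<lambda>y. y powr ((\<alpha> - 1) / 2)) x = N / ennreal (Gamma (\<alpha> / 2) ^ 2 * x powr \<beta>)"
    by (simp add: II_plus_def N_def \<beta>_def)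
  have "N \<le> (\<integral>\<^sup>+ z. (2 * D) * (ennreal (z powr ((\<alpha> - 3) / 2)) * indicator {0..x} z) \<partial>lborel)"
    unfolding N_def
  proof (rule nn_integral_mono)
    fix z
    show "ennreal (z powr (\<alpha> - 2)) * (\<integral>\<^sup>+ y\<in>{z<..}. ennreal (y powr ((\<alpha> - 1) / 2) * \<sigma> y powr (-\<alpha>)) \<partial>lborel) * indicator {0<..<x} z
       \<le> (2 * D) * (ennreal (z powr ((\<alpha> - 3) / 2)) * indicator {0..x} z)"
    proof (cases "0 < z \<and> z < x")
      case True
      have "ennreal (z powr (\<alpha> - 2)) * (\<integral>\<^sup>+ y\<in>{z<..}. ennreal (y powr ((\<alpha> - 1) / 2) * \<sigma> y powr (-\<alpha>)) \<partial>lborel)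
          \<le> ennreal (z powr (\<alpha> - 2)) * (2 * D * ennreal (z powr (- ((\<alpha> - 1) / 2))))"
        using True stepB[OF assms(1) assms(3) assms(4), of z] by (intro mult_left_mono) (auto simp: D_def)
      also have "\<dots> = (2 * D) * ennreal (z powr (\<alpha> - 2) * z powr (- ((\<alpha> - 1) / 2)))"
        by (simp add: ennreal_mult mult_ac)
      also have "z powr (\<alpha> - 2) * z powr (- ((\<alpha> - 1) / 2)) = z powr ((\<alpha> - 3) / 2)"
      proof -
        have "(\<alpha> - 2) + (- ((\<alpha> - 1) / 2)) = (\<alpha> - 3) / 2" by (simp add: field_simps)
        then show ?thesis by (simp only: powr_add[symmetric])
      qed
      finally show ?thesis using True by simp
    qed simp
  qed
  also have "\<dots> = (2 * D) * (\<integral>\<^sup>+ z. ennreal (z powr ((\<alpha> - 3) / 2)) * indicator {0..x} z \<partial>lborel)"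
    by (rule nn_integral_cmult) measurable
  also have "(\<integral>\<^sup>+ z. ennreal (z powr ((\<alpha> - 3) / 2)) * indicator {0..x} z \<partial>lborel) = ennreal (x powr \<beta> / \<beta>)"
  proof -
    have e: "(\<alpha> - 3) / 2 + 1 = \<beta>" by (simp add: \<beta>_def field_simps)
    have "((\<lambda>z. z powr ((\<alpha> - 3) / 2)) has_integral (x powr \<beta> / \<beta>)) {0..x}"
      using has_integral_powr_from_0[of "(\<alpha> - 3) / 2" x] assms(1,6) by (simp add: e)
    from nn_integral_has_integral_lebesgue'[OF _ this] show ?thesis by simp
  qed
  finally have Nle: "N \<le> 2 * D * ennreal (x powr \<beta> / \<beta>)" .
  have "II_plus \<alpha> \<sigma> (\<lambda>y. y powr ((\<alpha> - 1) / 2)) x \<le> 2 * D * ennreal (x powr \<beta> / \<beta>) / ennreal (Gamma (\<alpha> / 2) ^ 2 * x powr \<beta>)"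
    unfolding II by (rule divide_right_mono_ennreal[OF Nle])
  also have "2 * D * ennreal (x powr \<beta> / \<beta>) = D * ennreal (2 * (x powr \<beta> / \<beta>))"
  proof -
    have "ennreal (2 * (x powr \<beta> / \<beta>)) = ennreal 2 * ennreal (x powr \<beta> / \<beta>)"
      using bpos xb by (intro ennreal_mult) auto
    then show ?thesis by (simp only: mult_ac ennreal_numeral)
  qed
  also have "D * ennreal (2 * (x powr \<beta> / \<beta>)) / ennreal (Gamma (\<alpha> / 2) ^ 2 * x powr \<beta>)
      = D * ennreal (2 * (x powr \<beta> / \<beta>) / (Gamma (\<alpha> / 2) ^ 2 * x powr \<beta>))"
    using bpos xb Gpos by (simp add: ennreal_times_divide[symmetric] divide_ennreal)
  also have "2 * (x powr \<beta> / \<beta>) / (Gamma (\<alpha> / 2) ^ 2 * x powr \<beta>) = 4 / (Gamma (\<alpha> / 2) ^ 2 * (\<alpha> - 1))"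
  proof -
    have gen: "\<And>p G a. p > 0 \<Longrightarrow> G > 0 \<Longrightarrow> a > 0 \<Longrightarrow> 2 * (p / (a / 2)) / (G * p) = 4 / (G * (a::real))"
      by (simp add: field_simps)
    show ?thesis unfolding \<beta>_def using gen[of "x powr ((\<alpha> - 1) / 2)" "Gamma (\<alpha> / 2) ^ 2" "\<alpha> - 1"] xb Gpos assms(1)
      by (simp add: \<beta>_def)
  qed
  finally show ?thesis by (simp add: D_def mult.commute)
qed

end
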